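(* On the free algebra $\mathbb{C}\langle x,y\rangle$ each of the following pairs consists of two compatible Poisson brackets (each is a Poisson structure and their Schouten bracket vanishes): (1) $[xx^*,x^*]+[yy^*,x^*]$ and $[yy^*,xy^*]-[y^*,x^2x^*+xyy^*]$; (2) $[xx^*,x^*]+[yx^*,y^*]$ and $[yy^*,yxx^*+y^2y^*]$; (3) $[xy^*,xx^*]$ and $[x^2x^*+xyy^*,yx^*]+[yxx^*+y^2y^*,xx^*+yy^*]$.
   Context: $\mathbb{C}\langle x,y\rangle$ is the path algebra of the quiver $Q$ with one vertex and two loops $x,y$; the double quiver $\bar Q$ has loops $x,y,x^*,y^*$, and $\mathbb{C}\bar Q=\mathbb{C}\langle x,y,x^*,y^*\rangle$, graded by the number $r$ of starred letters in a monomial. $\mathcal{V}Q$ is the quotient of $\mathbb{C}\bar Q$ by the span of $PR-(-1)^{pr}RP$ for $P,R$ homogeneous of degrees $p,r$. For $w\in\{x,y,x^*,y^*\}$, $D_w(x_1\cdots x_n)=\sum_{i:x_i=w}(-1)^{\lambda_i\mu_i}x_{i+1}\cdots x_nx_1\cdots x_{i-1}$, $\lambda_i$ (resp. $\mu_i$) the number of starred letters among $x_{i+1},\dots,x_n$ (resp. $x_1,\dots,x_i$). For $\gamma\in\mathcal{V}^rQ,\delta\in\mathcal{V}^sQ$: $[\gamma,\delta]_{\mathcal V}=\sum_{a\in\{x,y\}}\big(D_{a^*}(\gamma)D_a(\delta)-(-1)^{(r-1)(s-1)}D_{a^*}(\delta)D_a(\gamma)\big)$ modulo the relations. A Poisson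 bracket (structure) is $\Pi\in\mathcal{V}^2Q$ with $[\Pi,\Pi]_{\mathcal V}=0$; $\Pi_1,\Pi_2$ are compatible if $[\Pi_i,\Pi_j]_{\mathcal V}=0$ for $i,j=1,2$. Here $[u,v]=uv-vu$ in $\mathcal{V}Q$. *)

theory Defs
  imports Complex_Main
begin

text \<open>Letters of the double quiver: loops x, y, x*, y*.  Xs = x*, Ys = y*.\<close>
datatype letter = X | Y | Xs | Ys

fun starred :: "letter \<Rightarrow> bool" where
  "starred X = False" | "starred Y = False" | "starred Xs = True" | "starred Ys = True"

definition nstar :: "letter list \<Rightarrow> nat" where
  "nstar w = length (filter starred w)"

text \<open>Elements of the path algebra C<x,y,x*,y*> as coefficient functions on words
  (elements of the algebra are those with finite support).\<close>
type_synonym cpoly = "letter list \<Rightarrow> complex"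

definition fin_supp :: "cpoly \<Rightarrow> bool" where
  "fin_supp P \<longleftrightarrow> finite {w. P w \<noteq> 0}"

definition homog :: "nat \<Rightarrow> cpoly \<Rightarrow> bool" where
  "homog p P \<longleftrightarrow> (\<forall>w. P w \<noteq> 0 \<longrightarrow> nstar w = p)"

definition pmono :: "letter list \<Rightarrow> cpoly" where
  "pmono u = (\<lambda>w. if w = u then 1 else 0)"

definition padd :: "cpoly \<Rightarrow> cpoly \<Rightarrow> cpoly" where
  "padd P R = (\<lambda>w. P w + R w)"

definition psub :: "cpoly \<Rightarrow> cpoly \<Rightarrow> cpoly" where
  "psub P R = (\<lambda>w. P w - R w)"

definition pscale :: "complex \<Rightarrow> cpoly \<Rightarrow> cpoly" where
  "pscale c P = (\<lambda>w. c * P w)"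

definition pmul :: "cpoly \<Rightarrow> cpoly \<Rightarrow> cpoly" where
  "pmul P R = (\<lambda>w. \<Sum>i\<in>{0..length w}. P (take i w) * R (drop i w))"

definition pcomm :: "cpoly \<Rightarrow> cpoly \<Rightarrow> cpoly" where
  "pcomm P R = psub (pmul P R) (pmul R P)"

text \<open>The subspace spanned by the graded commutators PR - (-1)^{pr} RP,
  P, R homogeneous of degrees p, r.  V Q is the quotient by it.\<close>
inductive_set relK :: "cpoly set" where
  zero: "(\<lambda>w. 0) \<in> relK"
| gen: "fin_supp P \<Longrightarrow> fin_supp R \<Longrightarrow> homog p P \<Longrightarrow> homog r R \<Longrightarrow>
         psub (pmul P R) (pscale ((-1) ^ (p * r)) (pmul R P)) \<in> relK"
| add: "A \<in> relK \<Longrightarrow> B \<in> relK \<Longrightarrow> padd A B \<in> relK"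
| scale: "A \<in> relK \<Longrightarrow> pscale c A \<in> relK"

text \<open>Cyclic derivative D_a, extended linearly: the monomial
  s @ [a] @ t (x_1..x_{i-1} = s, x_i = a, x_{i+1}..x_n = t) contributes
  (-1)^(lambda*mu) t @ s, with lambda = #stars(t), mu = #stars(s @ [a]).\<close>
definition Dcyc :: "letter \<Rightarrow> cpoly \<Rightarrow> cpoly" where
  "Dcyc a P = (\<lambda>v. \<Sum>k\<in>{0..length v}.
      (-1) ^ (nstar (take k v) * nstar (drop k v @ [a]))
        * P (drop k v @ [a] @ take k v))"

text \<open>The bracket [gamma,delta]_V for gamma of degree r, delta of degree s
  (computed on representatives).\<close>
definition vbr :: "nat \<Rightarrow> nat \<Rightarrow> cpoly \<Rightarrow> cpoly \<Rightarrow> cpoly" where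
  "vbr r s G H = psub
     (padd (pmul (Dcyc Xs G) (Dcyc X H)) (pmul (Dcyc Ys G) (Dcyc Y H)))
     (pscale ((-1) ^ ((r - 1) * (s - 1)))
        (padd (pmul (Dcyc Xs H) (Dcyc X G)) (pmul (Dcyc Ys H) (Dcyc Y G))))"

definition vzero :: "cpoly \<Rightarrow> bool" where
  "vzero P \<longleftrightarrow> P \<in> relK"

definition poisson :: "cpoly \<Rightarrow> bool" where
  "poisson P \<longleftrightarrow> fin_supp P \<and> homog 2 P \<and> vzero (vbr 2 2 P P)"

definition compatible :: "cpoly \<Rightarrow> cpoly \<Rightarrow> bool" where
  "compatible P1 P2 \<longleftrightarrow> poisson P1 \<and> poisson P2 \<and>
     vzero (vbr 2 2 P1 P1) \<and> vzero (vbr 2 2 P1 P2) \<and>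
     vzero (vbr 2 2 P2 P1) \<and> vzero (vbr 2 2 P2 P2)"

end

theory Submission imports Defs begin
definition sg :: "nat \<Rightarrow> int" where "sg n = (if even n then 1 else -1)"

lemma neg1_pow: "(-1::complex)^n = of_int (sg n)"
  by (cases "even n") (auto simp: sg_def)

definition lin :: "(int \<times> letter list) list \<Rightarrow> cpoly" where
  "lin A = (\<lambda>w. of_int (sum_list (map (\<lambda>(c,u). if u = w then c else 0) A)))"

lemma lin_Nil: "lin [] = (\<lambda>w. 0)" by (simp add: lin_def)
lemma lin_Cons: "lin ((c,u)#A) = (\<lambda>w. (if u = w then of_int c else 0) + lin A w)"
  by (simp add: lin_def fun_eq_iff)
lemma lin_append: "lin (A@B) = padd (lin A) (lin B)"
  by (simp add: lin_def padd_def fun_eq_iff)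
lemma pmono_lin: "pmono u = lin [(1,u)]"
  by (simp add: lin_def pmono_def fun_eq_iff)

definition negL :: "(int \<times> letter list) list \<Rightarrow> (int \<times> letter list) list" where
  "negL A = map (\<lambda>(c,u). (-c,u)) A"

lemma lin_neg: "pscale (-1) (lin A) = lin (negL A)"
  by (induction A) (auto simp: negL_def lin_Nil lin_Cons pscale_def fun_eq_iff)

lemma psub_lin: "psub (lin A) (lin B) = lin (A @ negL B)"
  by (simp add: lin_append flip: lin_neg) (simp add: psub_def padd_def pscale_def fun_eq_iff)

lemma pmul_single: "pmul (lin [(c,u)]) (lin [(d,v)]) = lin [(c*d, u@v)]"
proof (rule ext)
  fix w
  have "pmul (lin [(c,u)]) (lin [(d,v)]) w =
     (\<Sum>i\<in>{0..length w}. (if u = take i w \<and> v = drop i w then of_int (c*d) else 0))"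
    unfolding pmul_def lin_def by (intro sum.cong) auto
  also have "\<dots> = (\<Sum>i\<in>{0..length w}. (if i = length u \<and> w = u @ v then of_int (c*d) else 0))"
  proof (rule sum.cong)
    fix i assume i: "i \<in> {0..length w}"
    have iff: "(u = take i w \<and> v = drop i w) \<longleftrightarrow> (i = length u \<and> w = u @ v)"
    proof
      assume "u = take i w \<and> v = drop i w"
      then show "i = length u \<and> w = u @ v" using i by (metis append_take_drop_id atLeastAtMost_iff length_take min.absorb2)
    next
      assume "i = length u \<and> w = u @ v"
      then show "u = take i w \<and> v = drop i w" by simp
    qed
    show "(if u = take i w \<and> v = drop i w then of_int (c*d) else (0::complex)) =
          (if i = length u \<and> w = u @ v then of_int (c * d) else 0)"
      by (simp only: iff)
  qed simp
  also have "\<dots> = lin [(c*d, u@v)] w"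
    by (auto simp: lin_def)
  finally show "pmul (lin [(c,u)]) (lin [(d,v)]) w = lin [(c*d, u@v)] w" .
qed

lemma pmul_padd_l: "pmul (padd P Q) R = padd (pmul P R) (pmul Q R)"
  by (simp add: pmul_def padd_def fun_eq_iff ring_distribs sum.distrib)
lemma pmul_padd_r: "pmul R (padd P Q) = padd (pmul R P) (pmul R Q)"
  by (simp add: pmul_def padd_def fun_eq_iff ring_distribs sum.distrib)
lemma pmul_Nil_l: "pmul (lin []) R = lin []"
  by (simp add: pmul_def lin_def fun_eq_iff)
lemma pmul_Nil_r: "pmul R (lin []) = lin []"
  by (simp add: pmul_def lin_def fun_eq_iff)

lemma lin_Cons': "lin (x#A) = padd (lin [x]) (lin A)"
  by (metis append.left_neutral append_Cons lin_append)

lemma padd_lin: "padd (lin A) (lin B) = lin (A @ B)"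
  by (simp add: lin_append)

definition linmul :: "(int \<times> letter list) list \<Rightarrow> (int \<times> letter list) list \<Rightarrow> (int \<times> letter list) list" where
  "linmul A B = concat (map (\<lambda>(c,u). map (\<lambda>(d,v). (c*d, u@v)) B) A)"

lemma pmul_single_l: "pmul (lin [(c,u)]) (lin B) = lin (map (\<lambda>(d,v). (c*d, u@v)) B)"
proof (induction B)
  case Nil then show ?case by (simp add: pmul_Nil_r)
next
  case (Cons x B)
  obtain d v where x: "x = (d,v)" by fastforce
  have "pmul (lin [(c,u)]) (lin (x#B)) = pmul (lin [(c,u)]) (padd (lin [(d,v)]) (lin B))"
    by (simp only: x lin_Cons'[of "(d,v)" B])
  also have "\<dots> = padd (lin [(c*d,u@v)]) (lin (map (\<lambda>(d,v). (c*d, u@v)) B))"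
    by (simp only: pmul_padd_r pmul_single Cons)
  also have "\<dots> = lin (map (\<lambda>(d,v). (c*d, u@v)) (x#B))"
    by (simp add: x padd_lin)
  finally show ?case .
qed

lemma pmul_lin: "pmul (lin A) (lin B) = lin (linmul A B)"
proof (induction A)
  case Nil then show ?case by (simp add: pmul_Nil_l linmul_def)
next
  case (Cons x A)
  obtain c u where x: "x = (c,u)" by fastforce
  have "pmul (lin (x#A)) (lin B) = pmul (padd (lin [(c,u)]) (lin A)) (lin B)"
    by (simp only: x lin_Cons'[of "(c,u)" A])
  also have "\<dots> = padd (lin (map (\<lambda>(d,v). (c*d, u@v)) B)) (lin (linmul A B))"
    by (simp only: pmul_padd_l pmul_single_l Cons)
  also have "\<dots> = lin (linmul (x#A) B)"
    by (simp add: x padd_lin linmul_def)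
  finally show ?case .
qed

lemma pcomm_lin: "pcomm (lin A) (lin B) = lin (linmul A B @ negL (linmul B A))"
  by (simp add: pcomm_def pmul_lin psub_lin)

lemma key1: assumes "length u = Suc n" "length v = n" "k \<le> n" "i = n - k"
  shows "(drop k v @ [a] @ take k v = u) \<longleftrightarrow> (u!i = a \<and> drop (Suc i) u = take k v \<and> take i u = drop k v)"
proof
  assume h: "drop k v @ [a] @ take k v = u"
  have li: "length (drop k v) = i" using assms by simp
  show "u!i = a \<and> drop (Suc i) u = take k v \<and> take i u = drop k v"
    unfolding h[symmetric] using li by (simp add: nth_append)
next
  assume h: "u!i = a \<and> drop (Suc i) u = take k v \<and> take i u = drop k v"
  have "i < length u" using assms by simp
  then have "u = take i u @ [u!i] @ drop (Suc i) u" by (simp add: id_take_nth_drop)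
  then show "drop k v @ [a] @ take k v = u" using h by simp
qed

lemma key2: assumes "length u = Suc n" "length v = n" "k \<le> n" "i = n - k"
  shows "(drop (Suc i) u @ take i u = v) \<longleftrightarrow> (drop (Suc i) u = take k v \<and> take i u = drop k v)"
proof -
  have "length (drop (Suc i) u) = k" using assms by simp
  then show ?thesis by (simp add: append_eq_conv_conj)
qed

definition dm :: "letter \<Rightarrow> int \<Rightarrow> letter list \<Rightarrow> (int \<times> letter list) list" where
  "dm a c u = concat (map (\<lambda>i. if u!i = a then
      [(c * sg (nstar (drop (Suc i) u) * nstar (take i u @ [a])), drop (Suc i) u @ take i u)] else [])
     [0..<length u])"

lemma lin_concat_map: "lin (concat (map h xs)) w = (\<Sum>x\<leftarrow>xs. lin (h x) w)"
  by (induction xs) (simp_all add: lin_append padd_def lin_Nil)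

lemma Dcyc_single: "Dcyc a (lin [(c,u)]) = lin (dm a c u)"
proof (rule ext)
  fix v :: "letter list"
  define n where "n = length v"
  have L: "Dcyc a (lin [(c,u)]) v = (\<Sum>k\<in>{0..n}. of_int (sg (nstar (take k v) * nstar (drop k v @ [a])))
       * (if drop k v @ [a] @ take k v = u then of_int c else 0))"
    by (auto simp: Dcyc_def lin_def neg1_pow n_def intro!: sum.cong)
  have R: "lin (dm a c u) v = (\<Sum>i\<in>{..<length u}. (if u!i = a \<and> drop (Suc i) u @ take i u = v
       then of_int (c * sg (nstar (drop (Suc i) u) * nstar (take i u @ [a]))) else 0))"
    unfolding dm_def lin_concat_map
  proof -
    let ?h = "(\<lambda>i. if u!i = a then
      [(c * sg (nstar (drop (Suc i) u) * nstar (take i u @ [a])), drop (Suc i) u @ take i u)] else [])"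
    have "(\<Sum>x\<leftarrow>[0..<length u]. lin (?h x) v) = (\<Sum>x\<in>set [0..<length u]. lin (?h x) v)"
      by (simp only: sum_set_upt_conv_sum_list_nat)
    also have "set [0..<length u] = {..<length u}" by auto
    finally show "(\<Sum>x\<leftarrow>[0..<length u]. lin (?h x) v) = (\<Sum>i\<in>{..<length u}. (if u!i = a \<and> drop (Suc i) u @ take i u = v
       then of_int (c * sg (nstar (drop (Suc i) u) * nstar (take i u @ [a]))) else 0))"
      by (auto simp: lin_def intro!: sum.cong)
  qed
  show "Dcyc a (lin [(c,u)]) v = lin (dm a c u) v"
  proof (cases "length u = Suc n")
    case True
    have eq: "(if u ! (n-k) = a \<and> drop (Suc (n-k)) u @ take (n-k) u = v
           then of_int (c * sg (nstar (drop (Suc (n-k)) u) * nstar (take (n-k) u @ [a]))) else (0::complex))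
          = of_int (sg (nstar (take k v) * nstar (drop k v @ [a]))) *
          (if drop k v @ [a] @ take k v = u then of_int c else 0)" if k: "k \<le> n" for k
    proof -
      note k1 = key1[OF True n_def[symmetric] k refl, of a]
      note k2 = key2[OF True n_def[symmetric] k refl]
      show ?thesis unfolding k1 k2 by auto
    qed
    show ?thesis unfolding L R
      by (rule sum.reindex_bij_witness[of _ "\<lambda>i. n - i" "\<lambda>k. n - k"]) (use True eq in auto)
  next
    case False
    have "Dcyc a (lin [(c,u)]) v = 0" unfolding L
      by (rule sum.neutral) (use False n_def in auto)
    moreover have "lin (dm a c u) v = 0" unfolding R
      by (rule sum.neutral) (use False n_def in auto)
    ultimately show ?thesis by simp
  qed
qed

lemma Dcyc_padd: "Dcyc a (padd P Q) = padd (Dcyc a P) (Dcyc a Q)"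
  by (simp add: Dcyc_def padd_def fun_eq_iff ring_distribs sum.distrib)
lemma Dcyc_Nil: "Dcyc a (lin []) = lin []"
  by (simp add: Dcyc_def lin_def fun_eq_iff)

definition linD :: "letter \<Rightarrow> (int \<times> letter list) list \<Rightarrow> (int \<times> letter list) list" where
  "linD a A = concat (map (\<lambda>(c,u). dm a c u) A)"

lemma Dcyc_lin: "Dcyc a (lin A) = lin (linD a A)"
proof (induction A)
  case Nil then show ?case by (simp add: Dcyc_Nil linD_def)
next
  case (Cons x A)
  obtain c u where x: "x = (c,u)" by fastforce
  have "Dcyc a (lin (x#A)) = Dcyc a (padd (lin [(c,u)]) (lin A))"
    by (simp only: x lin_Cons'[of "(c,u)" A])
  also have "\<dots> = padd (lin (dm a c u)) (lin (linD a A))"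
    by (simp only: Dcyc_padd Dcyc_single Cons)
  also have "\<dots> = lin (linD a (x#A))"
    by (simp add: x padd_lin linD_def)
  finally show ?case .
qed

definition vbrL :: "(int \<times> letter list) list \<Rightarrow> (int \<times> letter list) list \<Rightarrow> (int \<times> letter list) list" where
  "vbrL A B = linmul (linD Xs A) (linD X B) @ linmul (linD Ys A) (linD Y B) @
              linmul (linD Xs B) (linD X A) @ linmul (linD Ys B) (linD Y A)"

lemma vbr_lin: "vbr 2 2 (lin A) (lin B) = lin (vbrL A B)"
  unfolding vbr_def Dcyc_lin pmul_lin vbrL_def
  by (simp add: psub_def padd_def pscale_def lin_append fun_eq_iff)

lemma pmul_pmono: "pmul (pmono u) (pmono v) = pmono (u@v)"
  by (simp add: pmono_lin pmul_single)

lemma fin_supp_lin: "fin_supp (lin A)"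
proof -
  have "{w. lin A w \<noteq> 0} \<subseteq> snd ` set A"
  proof
    fix w assume "w \<in> {w. lin A w \<noteq> 0}"
    then have "lin A w \<noteq> 0" by simp
    then show "w \<in> snd ` set A"
    proof (induction A)
      case Nil then show ?case by (simp add: lin_Nil)
    next
      case (Cons x A) then show ?case by (cases x) (auto simp: lin_Cons split: if_splits)
    qed
  qed
  then show ?thesis unfolding fin_supp_def by (rule finite_subset) simp
qed

lemma homog_lin: "list_all (\<lambda>(c,u). nstar u = p) A \<Longrightarrow> homog p (lin A)"
proof (induction A)
  case Nil then show ?case by (simp add: homog_def lin_Nil)
next
  case (Cons x A) then show ?case by (cases x) (auto simp: homog_def lin_Cons split: if_splits)
qed

lemma fin_supp_pmono: "fin_supp (pmono u)" by (simp add: pmono_lin fin_supp_lin)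
lemma homog_pmono: "homog (nstar u) (pmono u)" by (simp add: pmono_lin homog_lin)

lemma rot_rel: "psub (lin [(c,w)]) (lin [(c * sg (nstar (take k w) * nstar (drop k w)), drop k w @ take k w)]) \<in> relK"
proof -
  have g: "psub (pmul (pmono (take k w)) (pmono (drop k w)))
     (pscale ((-1) ^ (nstar (take k w) * nstar (drop k w))) (pmul (pmono (drop k w)) (pmono (take k w)))) \<in> relK"
    by (rule relK.gen[OF fin_supp_pmono fin_supp_pmono homog_pmono homog_pmono])
  have "pscale (of_int c) (psub (pmul (pmono (take k w)) (pmono (drop k w)))
     (pscale ((-1) ^ (nstar (take k w) * nstar (drop k w))) (pmul (pmono (drop k w)) (pmono (take k w))))) \<in> relK"
    by (rule relK.scale[OF g])
  also have "pscale (of_int c) (psub (pmul (pmono (take k w)) (pmono (drop k w)))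
     (pscale ((-1) ^ (nstar (take k w) * nstar (drop k w))) (pmul (pmono (drop k w)) (pmono (take k w)))))
     = psub (lin [(c,w)]) (lin [(c * sg (nstar (take k w) * nstar (drop k w)), drop k w @ take k w)])"
    unfolding pmul_pmono neg1_pow
    by (auto simp: fun_eq_iff pscale_def psub_def pmono_def lin_def algebra_simps)
  finally show ?thesis .
qed

fun cd :: "letter \<Rightarrow> nat" where
  "cd X = 0" | "cd Xs = 1" | "cd Y = 2" | "cd Ys = 3"

fun wless :: "letter list \<Rightarrow> letter list \<Rightarrow> bool" where
  "wless [] [] = False" | "wless [] (_#_) = True" | "wless (_#_) [] = False"
| "wless (a#u) (b#v) = (cd a < cd b \<or> (a = b \<and> wless u v))"

definition rot :: "nat \<Rightarrow> letter list \<Rightarrow> letter list" where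
  "rot k w = drop k w @ take k w"

definition bestk :: "letter list \<Rightarrow> nat" where
  "bestk w = fold (\<lambda>k b. if wless (rot k w) (rot b w) then k else b) [1..<length w] 0"

definition canonT :: "int \<times> letter list \<Rightarrow> int \<times> letter list" where
  "canonT x = (case x of (c,w) \<Rightarrow>
     (c * sg (nstar (take (bestk w) w) * nstar (drop (bestk w) w)), rot (bestk w) w))"

lemma diff_rel: "psub (lin A) (lin (map canonT A)) \<in> relK"
proof (induction A)
  case Nil
  have "psub (lin []) (lin (map canonT [])) = (\<lambda>w. 0)" by (simp add: psub_def lin_Nil)
  then show ?case using relK.zero by simp
next
  case (Cons x A)
  obtain c w where x: "x = (c,w)" by fastforce
  have eq: "psub (lin (x#A)) (lin (map canonT (x#A))) =
     padd (psub (lin [(c,w)]) (lin [(c * sg (nstar (take (bestk w) w) * nstar (drop (bestk w) w)), rot (bestk w) w)]))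
       (psub (lin A) (lin (map canonT A)))"
    by (simp add: x canonT_def psub_def padd_def lin_Cons lin_Nil fun_eq_iff)
  show ?case unfolding eq by (rule relK.add[OF rot_rel[of c w "bestk w", folded rot_def] Cons])
qed

fun mrg :: "(int \<times> letter list) list \<Rightarrow> (int \<times> letter list) list \<Rightarrow> (int \<times> letter list) list" where
  "mrg [] ys = ys"
| "mrg xs [] = xs"
| "mrg ((c,u)#xs) ((d,v)#ys) = (if wless u v then (c,u) # mrg xs ((d,v)#ys)
     else if wless v u then (d,v) # mrg ((c,u)#xs) ys
     else if u = v then (c+d,u) # mrg xs ys else (c,u) # (d,v) # mrg xs ys)"

lemma lin_mrg: "lin (mrg xs ys) = lin (xs @ ys)"
  by (induction xs ys rule: mrg.induct) (auto simp: lin_def fun_eq_iff)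

fun nrm :: "(int \<times> letter list) list \<Rightarrow> (int \<times> letter list) list" where
  "nrm [] = []"
| "nrm [x] = [x]"
| "nrm (x#y#zs) = mrg (nrm (take (Suc (Suc (length zs)) div 2) (x#y#zs))) (nrm (drop (Suc (Suc (length zs)) div 2) (x#y#zs)))"

lemma lin_nrm: "lin (nrm xs) = lin xs"
proof (induction xs rule: nrm.induct)
  case (3 x y zs)
  have "lin (nrm (x#y#zs)) = padd (lin (nrm (take (Suc (Suc (length zs)) div 2) (x # y # zs))))
       (lin (nrm (drop (Suc (Suc (length zs)) div 2) (x # y # zs))))"
    by (simp only: nrm.simps lin_mrg lin_append)
  also have "\<dots> = padd (lin (take (Suc (Suc (length zs)) div 2) (x # y # zs)))
       (lin (drop (Suc (Suc (length zs)) div 2) (x # y # zs)))"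
    by (simp only: 3)
  also have "\<dots> = lin (x#y#zs)" by (simp only: padd_lin append_take_drop_id)
  finally show ?case .
qed simp_all

definition check :: "(int \<times> letter list) list \<Rightarrow> bool" where
  "check L = list_all (\<lambda>(c,w). c = 0) (nrm (map canonT L))"

lemma lin_allzero: "list_all (\<lambda>(c,w). c = 0) A \<Longrightarrow> lin A = (\<lambda>w. 0)"
  by (induction A) (auto simp: lin_Nil lin_Cons)

lemma check_rel: "check L \<Longrightarrow> lin L \<in> relK"
proof -
  assume "check L"
  then have z: "lin (map canonT L) = (\<lambda>w. 0)"
    unfolding check_def using lin_allzero lin_nrm by metis
  have e: "lin L = padd (lin (map canonT L)) (psub (lin L) (lin (map canonT L)))"
    by (simp add: padd_def psub_def fun_eq_iff)
  have "padd (lin (map canonT L)) (psub (lin L) (lin (map canonT L))) \<in> relK"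
    by (rule relK.add[OF _ diff_rel]) (simp add: z relK.zero)
  then show ?thesis using e by simp
qed

lemma check_vz: "check (vbrL A B) \<Longrightarrow> vzero (vbr 2 2 (lin A) (lin B))"
  by (simp add: vzero_def vbr_lin check_rel)

lemma compat_lin:
  assumes "list_all (\<lambda>(c,u). nstar u = 2) A" "list_all (\<lambda>(c,u). nstar u = 2) B"
    "check (vbrL A A)" "check (vbrL A B)" "check (vbrL B A)" "check (vbrL B B)"
  shows "compatible (lin A) (lin B)"
  using assms by (simp add: compatible_def poisson_def fin_supp_lin homog_lin check_vz)

theorem mainTheorem7:
  shows "compatible
           (padd (pcomm (pmono [X, Xs]) (pmono [Xs])) (pcomm (pmono [Y, Ys]) (pmono [Xs])))
           (psub (pcomm (pmono [Y, Ys]) (pmono [X, Ys]))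
                 (pcomm (pmono [Ys]) (padd (pmono [X, X, Xs]) (pmono [X, Y, Ys]))))
       \<and> compatible
           (padd (pcomm (pmono [X, Xs]) (pmono [Xs])) (pcomm (pmono [Y, Xs]) (pmono [Ys])))
           (pcomm (pmono [Y, Ys]) (padd (pmono [Y, X, Xs]) (pmono [Y, Y, Ys])))
       \<and> compatible
           (pcomm (pmono [X, Ys]) (pmono [X, Xs]))
           (padd (pcomm (padd (pmono [X, X, Xs]) (pmono [X, Y, Ys])) (pmono [Y, Xs]))
                 (pcomm (padd (pmono [Y, X, Xs]) (pmono [Y, Y, Ys]))
                        (padd (pmono [X, Xs]) (pmono [Y, Ys]))))"
  apply (simp only: pmono_lin padd_lin pcomm_lin psub_lin)
  apply (intro conjI compat_lin)
  apply code_simp+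
  done

end
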